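(* For every $l$ and every arm $i$, the map $\Theta_l\ni\overline{\boldsymbol{\eta}}\mapsto\inf_{\overline{\boldsymbol{\eta}}'\in\Theta_{-l}}D(\boldsymbol{\eta}_i\|\boldsymbol{\eta}_i')$ is continuous.
   Context: $K$ arms; arm $i$ has observation density $f_i(x\mid\boldsymbol{\eta}_i)=h(x)\exp(\boldsymbol{\eta}_i^T\mathbf{T}(x)-\mathcal{A}_i(\boldsymbol{\eta}_i))$ with $\boldsymbol{\eta}_i$ in an open convex $\Psi_i\subset\mathbb{R}^d$, minimal representation, $\mathcal{A}_i$ strictly convex and $C^2$ with positive definite Hessian. $\boldsymbol{\kappa}_i=\nabla\mathcal{A}_i$; $D(\boldsymbol{\eta}_i\|\boldsymbol{\eta}_i')=(\boldsymbol{\eta}_i-\boldsymbol{\eta}_i')^T\boldsymbol{\kappa}_i(\boldsymbol{\eta}_i)-\mathcal{A}_i(\boldsymbol{\eta}_i)+\mathcal{A}_i(\boldsymbol{\eta}_i')$. $\overline{\boldsymbol{\eta}}=(\boldsymbol{\eta}_1,\dots,\boldsymbol{\eta}_K)$. Hypotheses: pairwise disjoint nonempty $\Theta_1,\dots,\Theta_M\subset\prod_i\Psi_i$ ($M\ge2$), each open relative to its affine hull; $\Theta_{-l}=\bigcup_{m\ne l}\Theta_m$. *)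

theory Defs
  imports "HOL-Analysis.Analysis" "HOL-Probability.Probability"
begin

definition strictly_convex_on :: "'a::real_vector set \<Rightarrow> ('a \<Rightarrow> real) \<Rightarrow> bool" where
  "strictly_convex_on S f \<longleftrightarrow> convex S \<and>
     (\<forall>x\<in>S. \<forall>y\<in>S. x \<noteq> y \<longrightarrow> (\<forall>u::real. 0 < u \<and> u < 1 \<longrightarrow>
        f ((1 - u) *\<^sub>R x + u *\<^sub>R y) < (1 - u) * f x + u * f y))"

text \<open>Bregman / KL divergence of an exponential family with log-partition A and mean map kappa:
  D(eta || eta') = (eta - eta')^T kappa(eta) - A(eta) + A(eta').\<close>
definition KL_div :: "(real^'d \<Rightarrow> real) \<Rightarrow> (real^'d \<Rightarrow> real^'d)
    \<Rightarrow> real^'d \<Rightarrow> real^'d \<Rightarrow> real" where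
  "KL_div A \<kappa> \<eta> \<eta>' = (\<eta> - \<eta>') \<bullet> \<kappa> \<eta> - A \<eta> + A \<eta>'"

end

theory Submission
  imports Defs
begin

lemma sc_convex: "strictly_convex_on S f \<Longrightarrow> convex_on S f"
proof (rule convex_onI)
  fix t :: real and x y assume a: "strictly_convex_on S f" "0 < t" "t < 1" "x \<in> S" "y \<in> S"
  show "f ((1 - t) *\<^sub>R x + t *\<^sub>R y) \<le> (1 - t) * f x + t * f y"
  proof (cases "x = y")
    case True then show ?thesis by (simp add: scaleR_collapse algebra_simps)
  next
    case False then show ?thesis using a unfolding strictly_convex_on_def by (meson less_imp_le)
  qed
next
  assume "strictly_convex_on S f" then show "convex S" by (simp add: strictly_convex_on_def)
qed

lemma tangent:
  fixes f :: "'a::euclidean_space \<Rightarrow> real"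
  assumes cf: "convex_on S f" and oS: "open S" and q: "q \<in> S" and p: "p \<in> S"
    and d: "(f has_derivative (\<lambda>v. k \<bullet> v)) (at q)"
  shows "f q + k \<bullet> (p - q) \<le> f p"
proof -
  define T where "T = {t::real. q + t *\<^sub>R (p - q) \<in> S}"
  define g where "g t = f (q + t *\<^sub>R (p - q))" for t
  have cS: "convex S" using cf by (simp add: convex_on_def)
  have lin: "(\<lambda>t::real. q + t *\<^sub>R (p - q)) = (\<lambda>x. q + x) \<circ> (\<lambda>t. t *\<^sub>R (p - q))" by auto
  have "open ((\<lambda>t::real. q + t *\<^sub>R (p - q)) -` S)"
    by (intro open_vimage oS continuous_intros)
  then have oT: "open T" unfolding T_def vimage_def by simp
  have cT: "convex T" unfolding T_def
  proof (rule convexI)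
    fix x y u v :: real assume h: "x \<in> {t. q + t *\<^sub>R (p - q) \<in> S}" "y \<in> {t. q + t *\<^sub>R (p - q) \<in> S}" "0 \<le> u" "0 \<le> v" "u + v = 1"
    have "q + (u * x + v * y) *\<^sub>R (p - q) = u *\<^sub>R (q + x *\<^sub>R (p - q)) + v *\<^sub>R (q + y *\<^sub>R (p - q))"
      using h(5) by (simp add: algebra_simps flip: scaleR_add_left)
    then show "u *\<^sub>R x + v *\<^sub>R y \<in> {t. q + t *\<^sub>R (p - q) \<in> S}"
      using h cS by (simp add: convex_def)
  qed
  have cg: "convex_on T g"
  proof (rule convex_onI[OF _ cT])
    fix t :: real and x y assume h: "0 < t" "t < 1" "x \<in> T" "y \<in> T"
    have "q + ((1 - t) *\<^sub>R x + t *\<^sub>R y) *\<^sub>R (p - q) = (1 - t) *\<^sub>R (q + x *\<^sub>R (p - q)) + t *\<^sub>R (q + y *\<^sub>R (p - q))"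
      by (simp add: algebra_simps)
    then show "g ((1 - t) *\<^sub>R x + t *\<^sub>R y) \<le> (1 - t) * g x + t * g y"
      unfolding g_def using h convex_onD[OF cf, of t] unfolding T_def by simp
  qed
  have 0: "0 \<in> T" "1 \<in> T" using q p by (auto simp: T_def)
  have "((\<lambda>t::real. q + t *\<^sub>R (p - q)) has_derivative (\<lambda>t. t *\<^sub>R (p - q))) (at 0)"
    by (auto intro!: derivative_eq_intros)
  moreover have d0: "(f has_derivative (\<lambda>v. k \<bullet> v)) (at (q + 0 *\<^sub>R (p - q)))" using d by simp
  ultimately have "(g has_derivative (\<lambda>t. k \<bullet> (t *\<^sub>R (p - q)))) (at 0)"
    unfolding g_def using has_derivative_compose by blast
  then have "(g has_field_derivative (k \<bullet> (p - q))) (at 0)"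
    by (rule has_derivative_imp_has_field_derivative) (simp add: mult.commute)
  then have "(g has_field_derivative (k \<bullet> (p - q))) (at 0 within T)"
    by (rule has_field_derivative_at_within)
  from convex_on_imp_above_tangent[OF cg convex_connected[OF cT] _ 0(2) this]
  have "g 1 - g 0 \<ge> k \<bullet> (p - q) * (1 - 0)" using 0 oT by (simp add: interior_open)
  then show ?thesis by (simp add: g_def)
qed
theorem lemma6:
  fixes \<mu> :: "'x measure"
    and h :: "'x \<Rightarrow> real"
    and T :: "'x \<Rightarrow> real^'d"
    and \<Psi> :: "'k::finite \<Rightarrow> (real^'d) set"
    and A :: "'k \<Rightarrow> real^'d \<Rightarrow> real"
    and \<kappa> :: "'k \<Rightarrow> real^'d \<Rightarrow> real^'d"
    and H :: "'k \<Rightarrow> real^'d \<Rightarrow> real^'d^'d"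
    and \<Theta> :: "nat \<Rightarrow> (real^'d^'k) set"
    and M l :: nat
    and i :: 'k
  assumes h_meas: "h \<in> borel_measurable \<mu>"
    and h_nonneg: "\<And>x. 0 \<le> h x"
    and T_meas: "T \<in> borel_measurable \<mu>"
    and density: "\<And>j \<eta>. \<eta> \<in> \<Psi> j \<Longrightarrow>
        integrable \<mu> (\<lambda>x. h x * exp (\<eta> \<bullet> T x - A j \<eta>)) \<and>
        (\<integral>x. h x * exp (\<eta> \<bullet> T x - A j \<eta>) \<partial>\<mu>) = 1"
    and minimal: "\<And>v c. (AE x in \<mu>. h x \<noteq> 0 \<longrightarrow> v \<bullet> T x = c) \<Longrightarrow> v = 0"
    and Psi_open: "\<And>j. open (\<Psi> j)"
    and Psi_convex: "\<And>j. convex (\<Psi> j)"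
    and A_strict: "\<And>j. strictly_convex_on (\<Psi> j) (A j)"
    and A_grad: "\<And>j \<eta>. \<eta> \<in> \<Psi> j \<Longrightarrow> (A j has_derivative (\<lambda>v. \<kappa> j \<eta> \<bullet> v)) (at \<eta>)"
    and A_hess: "\<And>j \<eta>. \<eta> \<in> \<Psi> j \<Longrightarrow> (\<kappa> j has_derivative (\<lambda>v. H j \<eta> *v v)) (at \<eta>)"
    and A_C2: "\<And>j. continuous_on (\<Psi> j) (H j)"
    and H_posdef: "\<And>j \<eta> v. \<eta> \<in> \<Psi> j \<Longrightarrow> v \<noteq> 0 \<Longrightarrow> 0 < v \<bullet> (H j \<eta> *v v)"
    and M_ge: "2 \<le> M"
    and Theta_ne: "\<And>m. m < M \<Longrightarrow> \<Theta> m \<noteq> {}"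
    and Theta_sub: "\<And>m. m < M \<Longrightarrow> \<Theta> m \<subseteq> {\<eta>b. \<forall>j. \<eta>b $ j \<in> \<Psi> j}"
    and Theta_relopen: "\<And>m. m < M \<Longrightarrow> openin (top_of_set (affine hull \<Theta> m)) (\<Theta> m)"
    and Theta_disj: "\<And>m m'. m < M \<Longrightarrow> m' < M \<Longrightarrow> m \<noteq> m' \<Longrightarrow> \<Theta> m \<inter> \<Theta> m' = {}"
    and l_lt: "l < M"
  shows "continuous_on (\<Theta> l)
           (\<lambda>\<eta>b. INF \<eta>b'\<in>(\<Union>m\<in>{..<M} - {l}. \<Theta> m). KL_div (A i) (\<kappa> i) (\<eta>b $ i) (\<eta>b' $ i))"
proof -
  define S where "S = (\<Union>m\<in>{..<M} - {l}. \<Theta> m)"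
  define m0 where "m0 = (if l = 0 then 1 else (0::nat))"
  have m0: "m0 < M" "m0 \<noteq> l" using M_ge l_lt by (auto simp: m0_def)
  have Sne: "S \<noteq> {}" using Theta_ne[OF m0(1)] m0 unfolding S_def by blast
  have SP: "\<And>x. x \<in> S \<Longrightarrow> x $ i \<in> \<Psi> i" using Theta_sub unfolding S_def by blast
  have cvx: "convex_on (\<Psi> i) (A i)" by (rule sc_convex[OF A_strict])
  have tan: "A i q + \<kappa> i q \<bullet> (p - q) \<le> A i p" if "q \<in> \<Psi> i" "p \<in> \<Psi> i" for p q
    by (rule tangent[OF cvx Psi_open that A_grad[OF that(1)]])
  define G where "G y = (INF x\<in>S. A i (x $ i) - (x $ i) \<bullet> y)" for y
  have low: "A i q - q \<bullet> \<kappa> i q \<le> A i (x $ i) - (x $ i) \<bullet> \<kappa> i q" if "q \<in> \<Psi> i" "x \<in> S" for q x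
  proof -
    have "A i q + \<kappa> i q \<bullet> (x $ i - q) \<le> A i (x $ i)" using tan[OF that(1) SP[OF that(2)]] .
    then show ?thesis by (simp add: inner_diff_right inner_commute)
  qed
  have bdd: "bdd_below ((\<lambda>x. A i (x $ i) - (x $ i) \<bullet> \<kappa> i q) ` S)" if "q \<in> \<Psi> i" for q
    using low[OF that] by (intro bdd_belowI2) auto
  have Glow: "G (\<kappa> i q) \<le> A i (x $ i) - (x $ i) \<bullet> \<kappa> i q" if "q \<in> \<Psi> i" "x \<in> S" for q x
    unfolding G_def by (rule cInf_lower) (use bdd[OF that(1)] that(2) in auto)
  have eq: "(INF x\<in>S. KL_div (A i) (\<kappa> i) e (x $ i)) = (e \<bullet> \<kappa> i e - A i e) + G (\<kappa> i e)"
    if "e \<in> \<Psi> i" for e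
  proof -
    have "(INF x\<in>S. KL_div (A i) (\<kappa> i) e (x $ i)) = (INF x\<in>S. (e \<bullet> \<kappa> i e - A i e) + (A i (x $ i) - (x $ i) \<bullet> \<kappa> i e))"
      by (rule INF_cong) (auto simp: KL_div_def inner_diff_left)
    also have "\<dots> = (e \<bullet> \<kappa> i e - A i e) + G (\<kappa> i e)"
      unfolding G_def by (rule Inf_add_eq[OF bdd[OF that] Sne])
    finally show ?thesis .
  qed
  have kcont: "continuous_on (\<Psi> i) (\<kappa> i)"
    by (rule continuous_at_imp_continuous_on) (meson A_hess has_derivative_continuous)
  have contG: "isCont G (\<kappa> i q)" if q: "q \<in> \<Psi> i" for q
  proof -
    have ker: "\<forall>x. H i q *v x = 0 \<longrightarrow> x = 0"
      using H_posdef[OF q] by (metis inner_zero_right less_irrefl)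
    then obtain B where "B ** H i q = mat 1" using matrix_left_invertible_ker by blast
    then have HB: "H i q ** B = mat 1" using matrix_left_right_inverse by blast
    have inv: "(\<lambda>v. H i q *v v) \<circ> (\<lambda>v. B *v v) = id"
      by (auto simp: fun_eq_iff matrix_vector_mul_assoc HB)
    have "\<kappa> i q \<in> interior (\<kappa> i ` \<Psi> i)"
      by (rule sussmann_open_mapping[OF Psi_open kcont q A_hess[OF q] _ inv])
         (auto simp: interior_open Psi_open q)
    then obtain r where r: "r > 0" "ball (\<kappa> i q) r \<subseteq> \<kappa> i ` \<Psi> i"
      using mem_interior by blast
    have "convex_on (ball (\<kappa> i q) r) (\<lambda>y. - G y)"
    proof (rule convex_onI)
      fix t :: real and y1 y2 assume h: "0 < t" "t < 1" "y1 \<in> ball (\<kappa> i q) r" "y2 \<in> ball (\<kappa> i q) r"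
      obtain a b where ab: "a \<in> \<Psi> i" "b \<in> \<Psi> i" "y1 = \<kappa> i a" "y2 = \<kappa> i b" using h r by blast
      have "(1 - t) * G y1 + t * G y2 \<le> G ((1 - t) *\<^sub>R y1 + t *\<^sub>R y2)"
        unfolding G_def[of "(1 - t) *\<^sub>R y1 + t *\<^sub>R y2"]
      proof (rule cINF_greatest[OF Sne])
        fix x assume x: "x \<in> S"
        have "(1 - t) * G y1 \<le> (1 - t) * (A i (x $ i) - (x $ i) \<bullet> y1)"
          using Glow[OF ab(1) x] ab h by (intro mult_left_mono) auto
        moreover have "t * G y2 \<le> t * (A i (x $ i) - (x $ i) \<bullet> y2)"
          using Glow[OF ab(2) x] ab h by (intro mult_left_mono) auto
        ultimately show "(1 - t) * G y1 + t * G y2 \<le> A i (x $ i) - (x $ i) \<bullet> ((1 - t) *\<^sub>R y1 + t *\<^sub>R y2)"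
          by (simp add: inner_add_right algebra_simps)
      qed
      then show "- G ((1 - t) *\<^sub>R y1 + t *\<^sub>R y2) \<le> (1 - t) * - G y1 + t * - G y2" by simp
    qed simp
    then have "continuous_on (ball (\<kappa> i q) r) (\<lambda>y. - G y)"
      by (intro convex_on_continuous) auto
    then have "isCont (\<lambda>y. - G y) (\<kappa> i q)"
      using r(1) by (simp add: continuous_on_eq_continuous_at)
    then have "isCont (\<lambda>y. - (- G y)) (\<kappa> i q)" by (rule continuous_minus)
    then show ?thesis by simp
  qed
  define \<Phi> where "\<Phi> e = (e \<bullet> \<kappa> i e - A i e) + G (\<kappa> i e)" for e
  have cPhi: "isCont \<Phi> e" if e: "e \<in> \<Psi> i" for e
  proof -
    have k: "isCont (\<kappa> i) e" using A_hess[OF e] has_derivative_continuous by blast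
    have a: "isCont (A i) e" using A_grad[OF e] has_derivative_continuous by blast
    have g: "isCont (\<lambda>e. G (\<kappa> i e)) e"
      using continuous_at_compose[OF k contG[OF e]] by (simp add: o_def)
    show ?thesis unfolding \<Phi>_def
      by (intro continuous_intros k a g)
  qed
  have "continuous_on (\<Theta> l) (\<lambda>\<eta>b. \<Phi> (\<eta>b $ i))"
  proof (rule continuous_at_imp_continuous_on, rule ballI)
    fix \<eta>b assume "\<eta>b \<in> \<Theta> l"
    then have e: "\<eta>b $ i \<in> \<Psi> i" using Theta_sub[OF l_lt] by blast
    have "isCont (\<lambda>\<eta>b. \<eta>b $ i) \<eta>b" by (intro continuous_intros)
    from continuous_at_compose[OF this cPhi[OF e]] show "isCont (\<lambda>\<eta>b. \<Phi> (\<eta>b $ i)) \<eta>b"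
      by (simp add: o_def)
  qed
  moreover have "\<And>\<eta>b. \<eta>b \<in> \<Theta> l \<Longrightarrow> \<Phi> (\<eta>b $ i) = (INF \<eta>b'\<in>(\<Union>m\<in>{..<M} - {l}. \<Theta> m). KL_div (A i) (\<kappa> i) (\<eta>b $ i) (\<eta>b' $ i))"
    using eq Theta_sub[OF l_lt] unfolding S_def \<Phi>_def by fastforce
  ultimately show ?thesis using continuous_on_cong by force
qed

end
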